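(* Let $d\ge 2$ and $0<\delta<\frac{\pi}{2}$. Every convex body $D\subset S^d$ of constant diameter $\delta$ is strictly convex, i.e., $\mathrm{bd}(D)$ contains no arc.
   Context: $S^d$ is the unit sphere in $E^{d+1}$; for non-antipodal points $a,b$, the arc $ab$ is the shorter great-circle arc joining them and $|ab|$ is its length. A set $C\subset S^d$ containing no pair of antipodes is convex if it contains the arc joining any two of its points; a closed convex set with non-empty interior is a convex body. A convex body $D$ of diameter $\delta$ (the maximum spherical distance between two of its points) is of constant diameter $\delta$ if for every $p\in\mathrm{bd}(D)$ there exists $p'\in\mathrm{bd}(D)$ with $|pp'|=\delta$. *)

theory Defs
  imports "HOL-Analysis.Analysis"
begin

text \<open>The unit sphere S^d in E^(d+1), where E^(d+1) is modelled by a Euclidean space 'a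
  with DIM('a) = d+1.\<close>

abbreviation Sph :: "'a::euclidean_space set" where
  "Sph \<equiv> sphere 0 1"

definition sdist :: "'a::euclidean_space \<Rightarrow> 'a \<Rightarrow> real" where
  "sdist a b = arccos (a \<bullet> b)"

text \<open>The shorter great-circle arc joining non-antipodal points a, b of the sphere:
  the radial projection of the chord [a,b] onto the sphere.\<close>
definition sarc :: "'a::euclidean_space \<Rightarrow> 'a \<Rightarrow> 'a set" where
  "sarc a b = (\<lambda>x. x /\<^sub>R norm x) ` closed_segment a b"

definition sconvex :: "'a::euclidean_space set \<Rightarrow> bool" where
  "sconvex C \<longleftrightarrow> C \<subseteq> Sph \<and> (\<forall>x\<in>C. - x \<notin> C) \<and> (\<forall>a\<in>C. \<forall>b\<in>C. sarc a b \<subseteq> C)"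

definition sinterior :: "'a::euclidean_space set \<Rightarrow> 'a set" where
  "sinterior C = (top_of_set Sph) interior_of C"

definition sboundary :: "'a::euclidean_space set \<Rightarrow> 'a set" where
  "sboundary C = (top_of_set Sph) frontier_of C"

definition sconvex_body :: "'a::euclidean_space set \<Rightarrow> bool" where
  "sconvex_body C \<longleftrightarrow> sconvex C \<and> closed C \<and> sinterior C \<noteq> {}"

definition sdiameter :: "'a::euclidean_space set \<Rightarrow> real" where
  "sdiameter C = Sup {sdist p q | p q. p \<in> C \<and> q \<in> C}"

definition const_diameter :: "'a::euclidean_space set \<Rightarrow> real \<Rightarrow> bool" where
  "const_diameter D \<delta> \<longleftrightarrow> sconvex_body D \<and> sdiameter D = \<delta> \<and>
     (\<forall>p\<in>sboundary D. \<exists>p'\<in>sboundary D. sdist p p' = \<delta>)"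

end

theory Submission
  imports Defs
begin

lemma inner_bounds:
  fixes x y :: "'a::euclidean_space"
  assumes "x \<in> Sph" "y \<in> Sph"
  shows "-1 \<le> x \<bullet> y \<and> x \<bullet> y \<le> 1"
proof -
  have "\<bar>x \<bullet> y\<bar> \<le> norm x * norm y" by (rule Cauchy_Schwarz_ineq2)
  with assms show ?thesis by auto
qed

lemma sdist_le_pi:
  fixes x y :: "'a::euclidean_space"
  assumes "x \<in> Sph" "y \<in> Sph"
  shows "sdist x y \<le> pi"
  using inner_bounds[OF assms] arccos_ubound unfolding sdist_def by blast

lemma sdist_le_diam:
  fixes D :: "'a::euclidean_space set"
  assumes "D \<subseteq> Sph" "x \<in> D" "y \<in> D"
  shows "sdist x y \<le> sdiameter D"
  unfolding sdiameter_def
proof (rule cSup_upper)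
  show "sdist x y \<in> {sdist p q |p q. p \<in> D \<and> q \<in> D}" using assms by blast
  show "bdd_above {sdist p q |p q. p \<in> D \<and> q \<in> D}"
    unfolding bdd_above_def using assms(1) sdist_le_pi by blast
qed

lemma ge_cos:
  fixes x y :: "'a::euclidean_space"
  assumes "x \<in> Sph" "y \<in> Sph" "sdist x y \<le> \<delta>" "\<delta> \<le> pi"
  shows "cos \<delta> \<le> x \<bullet> y"
proof -
  have b: "-1 \<le> x \<bullet> y" "x \<bullet> y \<le> 1" using inner_bounds[OF assms(1,2)] by auto
  have "0 \<le> arccos (x \<bullet> y)" using arccos_lbound b by blast
  hence "cos \<delta> \<le> cos (arccos (x \<bullet> y))"
    using assms(3,4) cos_mono_le_eq[of \<delta> "arccos (x \<bullet> y)"] arccos_ubound[OF b]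
    unfolding sdist_def by linarith
  thus ?thesis using b by simp
qed

theorem proposition1:
  fixes D :: "'a::euclidean_space set" and \<delta> :: real
  assumes "DIM('a) \<ge> 3"
    and "0 < \<delta>" and "\<delta> < pi / 2"
    and "const_diameter D \<delta>"
  shows "\<not> (\<exists>a\<in>Sph. \<exists>b\<in>Sph. a \<noteq> b \<and> a \<noteq> - b \<and> sarc a b \<subseteq> sboundary D)"
proof
  assume "\<exists>a\<in>Sph. \<exists>b\<in>Sph. a \<noteq> b \<and> a \<noteq> - b \<and> sarc a b \<subseteq> sboundary D"
  then obtain a b :: 'a where a: "a \<in> Sph" and b: "b \<in> Sph" and ab: "a \<noteq> b" "a \<noteq> - b"
    and sub: "sarc a b \<subseteq> sboundary D" by blast
  have cb: "sconvex_body D" and diam: "sdiameter D = \<delta>"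
    and opp: "\<forall>p\<in>sboundary D. \<exists>p'\<in>sboundary D. sdist p p' = \<delta>"
    using assms(4) unfolding const_diameter_def by auto
  have DS: "D \<subseteq> Sph" and clD: "closed D" using cb unfolding sconvex_body_def sconvex_def by auto
  have "closedin (top_of_set Sph) D" using DS clD by (simp add: closed_subset)
  hence bdD: "sboundary D \<subseteq> D" unfolding sboundary_def by (rule frontier_of_subset_closedin)
  define c where "c = (1/2) *\<^sub>R a + (1/2) *\<^sub>R b"
  have cseg: "c \<in> closed_segment a b"
    unfolding c_def closed_segment_def by (rule CollectI, rule exI[of _ "1/2"]) (auto simp: algebra_simps)
  have na: "norm a = 1" and nb: "norm b = 1" using a b by auto
  have aseg: "a \<in> closed_segment a b" and bseg: "b \<in> closed_segment a b" by auto
  have "a /\<^sub>R norm a \<in> sarc a b" unfolding sarc_def using aseg by blast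
  hence aD: "a \<in> sboundary D" using na sub by auto
  have "b /\<^sub>R norm b \<in> sarc a b" unfolding sarc_def using bseg by blast
  hence bD: "b \<in> sboundary D" using nb sub by auto
  define m where "m = c /\<^sub>R norm c"
  have "m \<in> sarc a b" unfolding sarc_def m_def using cseg by blast
  hence mD: "m \<in> sboundary D" using sub by auto
  then obtain p where pD: "p \<in> sboundary D" and mp: "sdist m p = \<delta>" using opp by blast
  have "a \<bullet> b < 1"
  proof -
    have "norm (a - b)^2 > 0" using ab by simp
    hence "(a - b) \<bullet> (a - b) > 0" by (simp add: power2_norm_eq_inner)
    moreover have "a \<bullet> a = 1" "b \<bullet> b = 1" using na nb by (simp_all add: norm_eq_1)
    ultimately show ?thesis by (simp add: inner_diff inner_commute)
  qed
  have cc: "c \<bullet> c = (1 + a \<bullet> b) / 2"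
    using na nb unfolding c_def by (simp add: inner_add inner_commute norm_eq_1 algebra_simps)
  have "c \<noteq> 0"
  proof
    assume "c = 0"
    have "a + b = 2 *\<^sub>R c" unfolding c_def by (simp add: algebra_simps)
    hence "a + b = 0" using \<open>c = 0\<close> by simp
    hence "a = - b" by (simp add: eq_neg_iff_add_eq_0)
    with ab show False by simp
  qed
  hence nc0: "norm c > 0" by simp
  have "norm c ^ 2 < 1" using cc \<open>a \<bullet> b < 1\<close> by (simp add: power2_norm_eq_inner)
  hence nc1: "norm c < 1" by (smt (verit) one_le_power)
  have mS: "m \<in> Sph" using nc0 unfolding m_def by simp
  have pS: "p \<in> Sph" using pD bdD DS by auto
  have dpi: "\<delta> \<le> pi" using assms(3) pi_gt_zero by linarith
  have "a \<bullet> p \<ge> cos \<delta>"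
    using ge_cos[OF a pS _ dpi] sdist_le_diam[OF DS] aD pD bdD diam by auto
  moreover have "b \<bullet> p \<ge> cos \<delta>"
    using ge_cos[OF b pS _ dpi] sdist_le_diam[OF DS] bD pD bdD diam by auto
  moreover have mpc: "m \<bullet> p = cos \<delta>"
    using mp inner_bounds[OF mS pS] unfolding sdist_def by (metis cos_arccos)
  moreover have "cos \<delta> > 0" using assms(2,3) by (intro cos_gt_zero_pi) auto
  moreover have "c \<bullet> p = (a \<bullet> p + b \<bullet> p) / 2"
    unfolding c_def by (simp add: inner_add_left)
  ultimately have cge: "c \<bullet> p \<ge> cos \<delta>" by (simp add: field_simps)
  moreover have "m \<bullet> p = (c \<bullet> p) / norm c" unfolding m_def by (simp add: divide_inverse)
  hence "c \<bullet> p = norm c * cos \<delta>" using mpc nc0 by (simp add: field_simps)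
  with cge have "c \<bullet> p \<ge> cos \<delta>" and "c \<bullet> p = norm c * cos \<delta>" by auto
  thus False using nc1 \<open>cos \<delta> > 0\<close>
    by (smt (verit) mult_less_cancel_right2)
qed

end
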